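(* Let $T$ be a $\pi$-increasing tree whose vertex-set contains $1$ and is not equal to $\{1\}$, and let $M$ be its maximum vertex. Then the blocks $\{1\}$ and $\pi^M$ lie in different connected components of $G_M(T)$. In particular, $T$ is reducible.
   Context: Standing assumptions: $r\ge2$ and $\pi$ is a set partition of $\{1,\dots,r\}$ having $\{1\}$ as a block; $\pi^x$ denotes the block containing $x$, and $\mu_i$ the maximum of block $\pi_i$. An unordered increasing tree is a rooted tree on distinct positive integers, sons unordered, each son larger than its father. A $\pi$-increasing tree is an unordered increasing tree $T$ whose vertex-set is a union of blocks of $\pi$ and such that for any two elements $i<j$ of a same block of $\pi$ contained in $V(T)$, $i$ is an ancestor of $j$ in $T$. $v$-decomposition: for a vertex $v$ of $T$ with chain $a_1<\dots<a_\ell=v$ from the root to $v$, removing the chain edges leaves components $T^{(a_j)}$ rooted at $a_j$. $v$-dependence graph $G_v(T)$: directed graph on the blocks of $\pi$ contained in $V(T)$; for each such block $\pi_i$ whose maximum $\mu_i$ is not on the chain $a_1,\dots,a_\ell$, $\mu_i$ is a non-root vertex of a unique $T^{(a_j)}$ and there is an edge (possibly a loop) $\pi_i\to\pi^{a_j}$; no other edges. Connected components are taken ignoring directions. A $\pi$-increasing tree with maximum vertex $M$ is irreducible if $G_M(T)$ is connected, reducible otherwise. *)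

theory Defs
  imports Main "HOL-Library.Disjoint_Sets"
begin

(* An unordered increasing tree on a finite vertex set V with root 'root' is
   represented by its parent map 'par': every non-root vertex v has a father
   par v \<in> V with par v < v. (This determines the tree uniquely.) *)
definition inc_tree :: "nat set \<Rightarrow> nat \<Rightarrow> (nat \<Rightarrow> nat) \<Rightarrow> bool" where
  "inc_tree V root par \<longleftrightarrow> finite V \<and> root \<in> V \<and>
     (\<forall>v \<in> V - {root}. par v \<in> V \<and> par v < v)"

definition tree_edges :: "nat set \<Rightarrow> nat \<Rightarrow> (nat \<Rightarrow> nat) \<Rightarrow> (nat \<times> nat) set" where
  "tree_edges V root par = {(par v, v) | v. v \<in> V - {root}}"

definition ancestor :: "nat set \<Rightarrow> nat \<Rightarrow> (nat \<Rightarrow> nat) \<Rightarrow> nat \<Rightarrow> nat \<Rightarrow> bool" where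
  "ancestor V root par a u \<longleftrightarrow> (a, u) \<in> (tree_edges V root par)\<^sup>+"

definition blk :: "nat set set \<Rightarrow> nat \<Rightarrow> nat set" where
  "blk P x = (THE b. b \<in> P \<and> x \<in> b)"

definition pi_inc_tree :: "nat set set \<Rightarrow> nat set \<Rightarrow> nat \<Rightarrow> (nat \<Rightarrow> nat) \<Rightarrow> bool" where
  "pi_inc_tree P V root par \<longleftrightarrow> inc_tree V root par \<and>
     (\<exists>Q \<subseteq> P. V = \<Union>Q) \<and>
     (\<forall>b \<in> P. b \<subseteq> V \<longrightarrow> (\<forall>i \<in> b. \<forall>j \<in> b. i < j \<longrightarrow> ancestor V root par i j))"

(* the chain a_1 < ... < a_l = v from the root to v *)
definition chain :: "nat set \<Rightarrow> nat \<Rightarrow> (nat \<Rightarrow> nat) \<Rightarrow> nat \<Rightarrow> nat set" where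
  "chain V root par v = {a \<in> V. (a, v) \<in> (tree_edges V root par)\<^sup>*}"

(* root a_j of the component T^(a_j) of the v-decomposition containing u:
   the deepest chain vertex which is an ancestor of (or equal to) u *)
definition comp_root :: "nat set \<Rightarrow> nat \<Rightarrow> (nat \<Rightarrow> nat) \<Rightarrow> nat \<Rightarrow> nat \<Rightarrow> nat" where
  "comp_root V root par v u =
     Max {a \<in> chain V root par v. (a, u) \<in> (tree_edges V root par)\<^sup>*}"

definition dep_nodes :: "nat set set \<Rightarrow> nat set \<Rightarrow> nat set set" where
  "dep_nodes P V = {b \<in> P. b \<subseteq> V}"

definition dep_edges :: "nat set set \<Rightarrow> nat set \<Rightarrow> nat \<Rightarrow> (nat \<Rightarrow> nat) \<Rightarrow> nat \<Rightarrow> (nat set \<times> nat set) set" where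
  "dep_edges P V root par v =
     {(b, blk P (comp_root V root par v (Max b))) | b.
        b \<in> dep_nodes P V \<and> Max b \<notin> chain V root par v}"

definition same_comp :: "('a \<times> 'a) set \<Rightarrow> 'a \<Rightarrow> 'a \<Rightarrow> bool" where
  "same_comp E x y \<longleftrightarrow> (x, y) \<in> (E \<union> E\<inverse>)\<^sup>*"

definition irreducible_tree :: "nat set set \<Rightarrow> nat set \<Rightarrow> nat \<Rightarrow> (nat \<Rightarrow> nat) \<Rightarrow> bool" where
  "irreducible_tree P V root par \<longleftrightarrow>
     (\<forall>b \<in> dep_nodes P V. \<forall>b' \<in> dep_nodes P V.
        same_comp (dep_edges P V root par (Max V)) b b')"

definition reducible_tree :: "nat set set \<Rightarrow> nat set \<Rightarrow> nat \<Rightarrow> (nat \<Rightarrow> nat) \<Rightarrow> bool" where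
  "reducible_tree P V root par \<longleftrightarrow> \<not> irreducible_tree P V root par"

end

theory Submission
  imports Defs
begin

lemma functional_sinks_aux:
  assumes functl: "\<forall>a b c. (a,b)\<in>E \<longrightarrow> (a,c)\<in>E \<longrightarrow> b=c"
    and sx: "\<And>z. (x,z)\<notin>E"
    and p: "(x,w) \<in> (E \<union> E\<inverse>)\<^sup>*"
  shows "(w,x) \<in> E\<^sup>*"
  using p
proof (induction rule: rtrancl_induct)
  case base then show ?case by simp
next
  case (step w z)
  from step.hyps(2) show ?case
  proof
    assume wz: "(w,z) \<in> E"
    from step.IH show ?thesis
    proof (cases rule: converse_rtranclE)
      case base then show ?thesis using wz sx by auto
    next
      case (step u)
      then show ?thesis using functl wz by blast
    qed
  next
    assume "(w,z) \<in> E\<inverse>"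
    then show ?thesis using step.IH by (auto intro: converse_rtrancl_into_rtrancl)
  qed
qed

lemma functional_sinks:
  assumes functl: "\<forall>a b c. (a,b)\<in>E \<longrightarrow> (a,c)\<in>E \<longrightarrow> b=c"
    and sx: "\<And>z. (x,z)\<notin>E" and sy: "\<And>z. (y,z)\<notin>E"
    and p: "(x,y) \<in> (E \<union> E\<inverse>)\<^sup>*"
  shows "x = y"
proof -
  have "(y,x) \<in> E\<^sup>*" using functional_sinks_aux[of E x y] functl sx p by blast
  then show ?thesis by (cases rule: converse_rtranclE) (use sy in auto)
qed

lemma root_anc:
  assumes "inc_tree V root par" "v \<in> V"
  shows "(root, v) \<in> (tree_edges V root par)\<^sup>*"
  using assms(2)
proof (induction v rule: less_induct)
  case (less v)
  show ?case
  proof (cases "v = root")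
    case True then show ?thesis by simp
  next
    case False
    with less.prems assms(1) have pv: "par v \<in> V" "par v < v"
      unfolding inc_tree_def by auto
    have "(par v, v) \<in> tree_edges V root par"
      unfolding tree_edges_def using False less.prems by auto
    with less.IH[OF pv(2) pv(1)] show ?thesis by auto
  qed
qed

theorem proposition3p8:
  fixes r :: nat and P :: "nat set set" and V :: "nat set" and root :: nat
    and par :: "nat \<Rightarrow> nat"
  assumes "r \<ge> 2"
    and "partition_on {1..r} P"
    and "{1} \<in> P"
    and "pi_inc_tree P V root par"
    and "1 \<in> V"
    and "V \<noteq> {1}"
  shows "\<not> same_comp (dep_edges P V root par (Max V)) {1} (blk P (Max V))
         \<and> reducible_tree P V root par"
proof -
  note pt = assms(2)
  have it: "inc_tree V root par" using assms(4) unfolding pi_inc_tree_def by auto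
  obtain Q where Q: "Q \<subseteq> P" "V = \<Union>Q" using assms(4) unfolding pi_inc_tree_def by auto
  have VP: "V \<subseteq> {1..r}" using Q pt unfolding partition_on_def by auto
  have finV: "finite V" using it unfolding inc_tree_def by auto
  have r1: "root = 1"
  proof (rule ccontr)
    assume "root \<noteq> 1"
    then have "par 1 \<in> V" "par 1 < 1" using it assms(5) unfolding inc_tree_def by auto
    then show False using VP by auto
  qed
  define M where "M = Max V"
  have MV: "M \<in> V" unfolding M_def using finV assms(5) by (auto intro: Max_in)
  have M1: "M \<noteq> 1"
  proof
    assume "M = 1"
    then have "\<forall>v\<in>V. v \<le> 1" unfolding M_def using finV by (metis Max_ge)
    then have "V \<subseteq> {1}" using VP by force
    then show False using assms(5,6) by auto
  qed
  have uniq: "\<And>x. x \<in> {1..r} \<Longrightarrow> \<exists>!b. b \<in> P \<and> x \<in> b"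
    using pt unfolding partition_on_def disjoint_def by blast
  obtain q where q: "q \<in> Q" "M \<in> q" using MV Q by auto
  have blkM: "blk P M = q" unfolding blk_def
  proof (rule the_equality)
    show "q \<in> P \<and> M \<in> q" using q Q by auto
    fix b assume "b \<in> P \<and> M \<in> b"
    moreover have "M \<in> {1..r}" using MV VP by auto
    ultimately show "b = q" using uniq[of M] q Q by blast
  qed
  have qV: "q \<subseteq> V" using q Q by auto
  have maxq: "Max q = M"
  proof -
    have fq: "finite q" using qV finV finite_subset by auto
    have "Max q \<le> M" unfolding M_def using qV fq q finV by (auto intro: Max_mono)
    moreover have "M \<le> Max q" using fq q by auto
    ultimately show ?thesis by simp
  qed
  have Mch: "M \<in> chain V root par M" unfolding chain_def using MV by auto
  have Ich: "1 \<in> chain V root par M" unfolding chain_def using MV assms(5) root_anc[OF it MV] r1 by auto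
  define E where "E = dep_edges P V root par M"
  have functl: "\<forall>a b c. (a,b)\<in>E \<longrightarrow> (a,c)\<in>E \<longrightarrow> b=c"
    unfolding E_def dep_edges_def by auto
  have s1: "\<And>z. ({1},z)\<notin>E" unfolding E_def dep_edges_def using Ich by auto
  have s2: "\<And>z. (q,z)\<notin>E" unfolding E_def dep_edges_def using Mch maxq by auto
  have neq: "{1} \<noteq> q" using q M1 by auto
  have nc: "\<not> same_comp E {1} q"
    unfolding same_comp_def using functional_sinks[of E "{1}" q] functl s1 s2 neq by blast
  have d1: "{1} \<in> dep_nodes P V" unfolding dep_nodes_def using assms(3,5) by auto
  have d2: "q \<in> dep_nodes P V" unfolding dep_nodes_def using q Q qV by auto
  show ?thesis
    using nc d1 d2 unfolding reducible_tree_def irreducible_tree_def E_def blkM M_def[symmetric]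
    by (metis blkM)
qed

end
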